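(* Let $Q=\sum_{i\in I} E_{i,\sigma(i)}\in M_n$ be a subpermutation. Then a matrix $A=[a_{ij}]\in M_n$ lies in the coset $QU_n=\{QU: U\in U_n\}$ if and only if $A$ meets the following conditions: (1) $A$ and $Q$ have the same places of nonzero rows, namely the nonzero rows of $A$ are exactly those indexed by $I$; (2) $A$ and $Q$ have the same places and values of the first nonzero entry in each nonzero row; precisely, for each $i\in I$, $a_{i,\sigma(i)}=1$ is the first nonzero entry of the $i$th row of $A$.
   Context: Let $\mathbb{F}$ be a fixed field and $M_n$ the set of $n\times n$ matrices over $\mathbb{F}$. Let $U_n$ be the group of $n\times n$ unit upper triangular matrices (upper triangular with all diagonal entries equal to $1$) over $\mathbb{F}$. For $i,j\in[n]=\{1,\ldots,n\}$, $E_{i,j}$ denotes the $n\times n$ matrix with $1$ in the $(i,j)$ entry and $0$ elsewhere. A matrix $Q\in M_n$ is a subpermutation if each of its rows and columns has at most one nonzero entry, which equals $1$. Every subpermutation $Q\in M_n$ can be written as $Q=\sum_{i\in I} E_{i,\sigma(i)}$, where $I\subseteq[n]$ and $\sigma: I\to\sigma(I)\subseteq[n]$ is a bijection (with $Q=0$ if $I=\emptyset$). *)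

theory Defs
  imports "HOL-Analysis.Analysis"
begin

text \<open>n x n matrices over a field are represented as 'a ^ 'n ^ 'n, where the index
type 'n is finite and well-ordered (hence linearly ordered), playing the role of [n].\<close>

definition unit_upper :: "(('a::field, 'n::{finite,wellorder}) vec, 'n) vec \<Rightarrow> bool" where
  "unit_upper U \<longleftrightarrow> (\<forall>i j. j < i \<longrightarrow> U $ i $ j = 0) \<and> (\<forall>i. U $ i $ i = 1)"

definition subperm :: "'n::{finite,wellorder} set \<Rightarrow> ('n \<Rightarrow> 'n) \<Rightarrow> (('a::field, 'n) vec, 'n) vec" where
  "subperm I \<sigma> = (\<chi> i j. if i \<in> I \<and> j = \<sigma> i then 1 else 0)"

definition coset_QU :: "(('a::field, 'n::{finite,wellorder}) vec, 'n) vec \<Rightarrow> (('a, 'n) vec, 'n) vec set" where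
  "coset_QU Q = {Q ** U | U. unit_upper U}"

end

theory Submission
  imports Defs
begin

lemma subperm_mult:
  fixes U :: "(('a::field, 'n::{finite,wellorder}) vec, 'n) vec"
  shows "(subperm I \<sigma> ** U) $ i $ j = (if i \<in> I then U $ (\<sigma> i) $ j else 0)"
proof -
  have "(subperm I \<sigma> ** U) $ i $ j =
        (\<Sum>k\<in>UNIV. (if i \<in> I \<and> k = \<sigma> i then 1 else 0) * U $ k $ j)"
    by (simp add: matrix_matrix_mult_def subperm_def)
  also have "\<dots> = (\<Sum>k\<in>UNIV. (if k = \<sigma> i then (if i \<in> I then U $ k $ j else 0) else 0))"
    by (rule sum.cong) auto
  also have "\<dots> = (if i \<in> I then U $ (\<sigma> i) $ j else 0)"
    by (simp add: sum.delta)
  finally show ?thesis .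
qed

theorem lemma2p4:
  fixes I :: "'n::{finite,wellorder} set" and \<sigma> :: "'n \<Rightarrow> 'n"
    and A :: "(('a::field, 'n) vec, 'n) vec"
  assumes "inj_on \<sigma> I"
  shows "A \<in> coset_QU (subperm I \<sigma>) \<longleftrightarrow>
    ((\<forall>i. (\<exists>j. A $ i $ j \<noteq> 0) \<longleftrightarrow> i \<in> I) \<and>
     (\<forall>i\<in>I. A $ i $ (\<sigma> i) = 1 \<and> (\<forall>j. j < \<sigma> i \<longrightarrow> A $ i $ j = 0)))"
proof
  assume "A \<in> coset_QU (subperm I \<sigma>)"
  then obtain U where U: "unit_upper U" and A: "A = subperm I \<sigma> ** U"
    unfolding coset_QU_def by blast
  have e: "A $ i $ j = (if i \<in> I then U $ (\<sigma> i) $ j else 0)" for i j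
    using A subperm_mult by metis
  show "((\<forall>i. (\<exists>j. A $ i $ j \<noteq> 0) \<longleftrightarrow> i \<in> I) \<and>
     (\<forall>i\<in>I. A $ i $ (\<sigma> i) = 1 \<and> (\<forall>j. j < \<sigma> i \<longrightarrow> A $ i $ j = 0)))"
    using U unfolding e unit_upper_def by (metis one_neq_zero)
next
  assume H: "((\<forall>i. (\<exists>j. A $ i $ j \<noteq> 0) \<longleftrightarrow> i \<in> I) \<and>
     (\<forall>i\<in>I. A $ i $ (\<sigma> i) = 1 \<and> (\<forall>j. j < \<sigma> i \<longrightarrow> A $ i $ j = 0)))"
  define U :: "(('a, 'n) vec, 'n) vec" where
    "U = (\<chi> k j. if k \<in> \<sigma> ` I then A $ (inv_into I \<sigma> k) $ j else (if k = j then 1 else 0))"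
  have Us: "U $ (\<sigma> i) $ j = A $ i $ j" if "i \<in> I" for i j
    using that assms by (simp add: U_def)
  have "unit_upper U"
    unfolding unit_upper_def
  proof (intro conjI allI impI)
    fix i j :: 'n assume "j < i"
    show "U $ i $ j = 0"
    proof (cases "i \<in> \<sigma> ` I")
      case True
      then obtain k where "k \<in> I" "i = \<sigma> k" by blast
      then show ?thesis using Us H \<open>j < i\<close> by auto
    next
      case False
      then show ?thesis using \<open>j < i\<close> by (simp add: U_def)
    qed
  next
    fix i :: 'n
    show "U $ i $ i = 1"
    proof (cases "i \<in> \<sigma> ` I")
      case True
      then obtain k where "k \<in> I" "i = \<sigma> k" by blast
      then show ?thesis using Us H by auto
    next
      case False
      then show ?thesis by (simp add: U_def)
    qed
  qed
  moreover have "A = subperm I \<sigma> ** U"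
  proof (intro vec_eq_iff[THEN iffD2] allI)
    fix i j :: 'n
    show "A $ i $ j = (subperm I \<sigma> ** U) $ i $ j"
      unfolding subperm_mult using Us H by auto
  qed
  ultimately show "A \<in> coset_QU (subperm I \<sigma>)"
    unfolding coset_QU_def by blast
qed

end
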